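(* Let $\lambda\in ba(\mathcal A)$, $\mathscr M\subset ba(\mathcal A,\lambda)$, and let $\mathscr H_0\subset\mathcal A$ generate the ring $\mathscr H$. There exist $H_1,H_2,\ldots\in\mathscr H_0$ such that, with $G_n=H_n\setminus\bigcup_{k<n}H_k$ and $G=\bigcap_nH_n^c$, $$|\mu|^*(H\cap G)=0\quad\text{and}\quad\mu(A\cap H)=\sum_n\mu(A\cap H\cap G_n)\qquad\mu\in\mathscr M,\ A\in\mathcal A,\ H\in\mathscr H.$$ Moreover: (i) if $\mu\in\mathscr M$ is $\mathscr H_0$-inner regular, then $\mu(A)=\sum_n\mu(A\cap G_n)$ for all $A\in\mathcal A$; (ii) if $\mathscr H_0$ is closed under countable unions, then $\mu(A)=\mu(A\cap G)+\sum_n\mu(A\cap G_n)$ for all $\mu\in\mathscr M$, $A\in\mathcal A$.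
   Context: $\mathcal A$ algebra of subsets of $\Omega$; $ba(\mathcal A)$ bounded finitely additive real set functions, $|\mu|$ total variation, $\mu^+,\mu^-$ positive and negative parts. $ba(\mathcal A,\lambda)=\{\mu:\mu\ll\lambda\}$, where $\mu\ll\lambda$ means for every $\varepsilon>0$ there is $\delta>0$ with $|\lambda|(A)<\delta\Rightarrow|\mu|(A)<\varepsilon$. $|\mu|^*(E)=\inf\{|\mu|(A):A\in\mathcal A,\ E\subset A\}$ is the outer measure for $E\subset\Omega$. $\mu$ is $\mathscr H_0$-inner regular if $\mu^+(A)=\sup\{\mu(H):H\in\mathscr H_0,\ H\subset A\}$ and $\mu^-(A)=\sup\{-\mu(H):H\in\mathscr H_0,\ H\subset A\}$ for all $A\in\mathcal A$. *)

theory Defs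
  imports "HOL-Analysis.Analysis"
begin

definition ba :: "'a set set \<Rightarrow> ('a set \<Rightarrow> real) set" where
  "ba AA = {\<mu>. (\<forall>B\<in>AA. \<forall>C\<in>AA. B \<inter> C = {} \<longrightarrow> \<mu> (B \<union> C) = \<mu> B + \<mu> C)
              \<and> (\<exists>c. \<forall>B\<in>AA. \<bar>\<mu> B\<bar> \<le> c)}"

definition tv :: "'a set set \<Rightarrow> ('a set \<Rightarrow> real) \<Rightarrow> 'a set \<Rightarrow> real" where
  "tv AA \<mu> A = Sup {(\<Sum>B\<in>P. \<bar>\<mu> B\<bar>) | P. finite P \<and> P \<subseteq> AA \<and> disjoint P \<and> \<Union>P = A}"

definition pos_part :: "'a set set \<Rightarrow> ('a set \<Rightarrow> real) \<Rightarrow> 'a set \<Rightarrow> real" where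
  "pos_part AA \<mu> A = Sup {\<mu> B | B. B \<in> AA \<and> B \<subseteq> A}"

definition neg_part :: "'a set set \<Rightarrow> ('a set \<Rightarrow> real) \<Rightarrow> 'a set \<Rightarrow> real" where
  "neg_part AA \<mu> A = Sup {- \<mu> B | B. B \<in> AA \<and> B \<subseteq> A}"

definition abs_cont :: "'a set set \<Rightarrow> ('a set \<Rightarrow> real) \<Rightarrow> ('a set \<Rightarrow> real) \<Rightarrow> bool" where
  "abs_cont AA \<mu> lam \<longleftrightarrow> (\<forall>\<epsilon>>0. \<exists>\<delta>>0. \<forall>A\<in>AA. tv AA lam A < \<delta> \<longrightarrow> tv AA \<mu> A < \<epsilon>)"

definition ba_ac :: "'a set set \<Rightarrow> ('a set \<Rightarrow> real) \<Rightarrow> ('a set \<Rightarrow> real) set" where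
  "ba_ac AA lam = {\<mu> \<in> ba AA. abs_cont AA \<mu> lam}"

definition outer_tv :: "'a set set \<Rightarrow> ('a set \<Rightarrow> real) \<Rightarrow> 'a set \<Rightarrow> real" where
  "outer_tv AA \<mu> E = Inf {tv AA \<mu> A | A. A \<in> AA \<and> E \<subseteq> A}"

definition inner_regular :: "'a set set \<Rightarrow> 'a set set \<Rightarrow> ('a set \<Rightarrow> real) \<Rightarrow> bool" where
  "inner_regular AA H0 \<mu> \<longleftrightarrow>
     (\<forall>A\<in>AA. ereal (pos_part AA \<mu> A) = (SUP H\<in>{H\<in>H0. H \<subseteq> A}. ereal (\<mu> H))
           \<and> ereal (neg_part AA \<mu> A) = (SUP H\<in>{H\<in>H0. H \<subseteq> A}. ereal (- \<mu> H)))"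

definition gen_ring :: "'a set \<Rightarrow> 'a set set \<Rightarrow> 'a set set" where
  "gen_ring \<Omega> H0 = \<Inter>{R. ring_of_sets \<Omega> R \<and> H0 \<subseteq> R}"

end

theory Submission imports Defs begin

context algebra begin

lemma ba_add: "\<mu> \<in> ba M \<Longrightarrow> B \<in> M \<Longrightarrow> C \<in> M \<Longrightarrow> B \<inter> C = {} \<Longrightarrow> \<mu> (B \<union> C) = \<mu> B + \<mu> C"
  unfolding ba_def by auto

lemma ba_empty: "\<mu> \<in> ba M \<Longrightarrow> \<mu> {} = 0"
  using ba_add[of \<mu> "{}" "{}"] by auto

lemma ba_bound: "\<mu> \<in> ba M \<Longrightarrow> \<exists>c. \<forall>B\<in>M. \<bar>\<mu> B\<bar> \<le> c"
  unfolding ba_def by auto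

lemma fin_add:
  assumes mu: "\<mu> \<in> ba M"
  shows "finite P \<Longrightarrow> P \<subseteq> M \<Longrightarrow> disjoint P \<Longrightarrow> \<mu> (\<Union>P) = (\<Sum>B\<in>P. \<mu> B)"
proof (induction P rule: finite_induct)
  case empty then show ?case using ba_empty[OF mu] by simp
next
  case (insert x P)
  have PM: "P \<subseteq> M" and xM: "x \<in> M" using insert.prems(1) by simp_all
  have dP: "disjoint P" using insert.prems(2) by (simp add: pairwise_insert)
  have xB: "x \<inter> B = {}" if B: "B \<in> P" for B
  proof -
    have "x \<noteq> B" using B insert.hyps(2) by blast
    then show ?thesis using insert.prems(2) B unfolding pairwise_insert disjnt_def by simp
  qed
  have "x \<inter> \<Union>P = {}" using xB by blast
  moreover have "\<Union>P \<in> M" using PM insert.hyps(1) by (rule_tac finite_Union) simp_all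
  ultimately have "\<mu> (\<Union>(insert x P)) = \<mu> x + \<mu> (\<Union>P)"
    using ba_add[OF mu xM, of "\<Union>P"] by simp
  then show ?case using insert.IH[OF PM dP] insert.hyps by simp
qed

lemma tv_set_bdd:
  assumes mu: "\<mu> \<in> ba M"
  shows "\<exists>c. \<forall>P. finite P \<and> P \<subseteq> M \<and> disjoint P \<longrightarrow> (\<Sum>B\<in>P. \<bar>\<mu> B\<bar>) \<le> c"
proof -
  obtain c where c: "\<forall>B\<in>M. \<bar>\<mu> B\<bar> \<le> c" using ba_bound[OF mu] by blast
  have "(\<Sum>B\<in>P. \<bar>\<mu> B\<bar>) \<le> 2*c" if P: "finite P" "P \<subseteq> M" "disjoint P" for P
  proof -
    define Pp where "Pp = {B\<in>P. 0 \<le> \<mu> B}"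
    define Pn where "Pn = {B\<in>P. \<not> 0 \<le> \<mu> B}"
    have fp: "finite Pp" "Pp \<subseteq> M" "disjoint Pp" using P unfolding Pp_def
      by (auto intro: pairwise_subset)
    have fn: "finite Pn" "Pn \<subseteq> M" "disjoint Pn" using P unfolding Pn_def
      by (auto intro: pairwise_subset)
    have "(\<Sum>B\<in>P. \<bar>\<mu> B\<bar>) = (\<Sum>B\<in>P. if 0 \<le> \<mu> B then \<mu> B else - \<mu> B)"
      by (rule sum.cong) auto
    also have "\<dots> = (\<Sum>B\<in>Pp. \<mu> B) + (\<Sum>B\<in>Pn. - \<mu> B)"
      unfolding sum.If_cases[OF P(1)] Pp_def Pn_def
      by (intro arg_cong2[where f="(+)"] sum.cong) auto
    also have "\<dots> = \<mu> (\<Union>Pp) - \<mu> (\<Union>Pn)"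
      using fin_add[OF mu fp] fin_add[OF mu fn] by (simp add: sum_negf)
    also have "\<dots> \<le> 2*c"
    proof -
      have "\<Union>Pp \<in> M" "\<Union>Pn \<in> M" using fp fn by (blast intro: finite_Union)+
      then have "\<bar>\<mu> (\<Union>Pp)\<bar> \<le> c" "\<bar>\<mu> (\<Union>Pn)\<bar> \<le> c" using c by blast+
      then show ?thesis by (simp add: abs_le_iff)
    qed
    finally show ?thesis .
  qed
  then show ?thesis by blast
qed

definition "TS \<mu> A = {(\<Sum>B\<in>P. \<bar>\<mu> B\<bar>) | P. finite P \<and> P \<subseteq> M \<and> disjoint P \<and> \<Union>P = A}"

lemma tv_TS: "tv M \<mu> A = Sup (TS \<mu> A)" unfolding tv_def TS_def by simp

lemma TS_bdd: "\<mu> \<in> ba M \<Longrightarrow> bdd_above (TS \<mu> A)"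
proof -
  assume mu: "\<mu> \<in> ba M"
  obtain c where c: "\<forall>P. finite P \<and> P \<subseteq> M \<and> disjoint P \<longrightarrow> (\<Sum>B\<in>P. \<bar>\<mu> B\<bar>) \<le> c"
    using tv_set_bdd[OF mu] by blast
  show ?thesis
  proof (rule bdd_aboveI)
    fix x assume "x \<in> TS \<mu> A"
    then obtain P where "x = (\<Sum>B\<in>P. \<bar>\<mu> B\<bar>)" "finite P" "P \<subseteq> M" "disjoint P"
      unfolding TS_def by blast
    then show "x \<le> c" using c by simp
  qed
qed

lemma TS_single: "A \<in> M \<Longrightarrow> \<bar>\<mu> A\<bar> \<in> TS \<mu> A"
  unfolding TS_def by (rule CollectI, rule exI[of _ "{A}"]) simp

lemma TS_ne: "A \<in> M \<Longrightarrow> TS \<mu> A \<noteq> {}"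
  using TS_single by blast

lemma tv_ge: "\<mu> \<in> ba M \<Longrightarrow> A \<in> M \<Longrightarrow> \<bar>\<mu> A\<bar> \<le> tv M \<mu> A"
  unfolding tv_TS by (rule cSup_upper[OF TS_single TS_bdd])

lemma tv_nonneg: "\<mu> \<in> ba M \<Longrightarrow> A \<in> M \<Longrightarrow> 0 \<le> tv M \<mu> A"
  using tv_ge[of \<mu> A] by linarith

lemma tv_super:
  assumes mu: "\<mu> \<in> ba M" and B: "B \<in> M" and C: "C \<in> M" and BC: "B \<inter> C = {}"
  shows "tv M \<mu> B + tv M \<mu> C \<le> tv M \<mu> (B \<union> C)"
proof -
  have key: "x + y \<le> tv M \<mu> (B \<union> C)" if x: "x \<in> TS \<mu> B" and y: "y \<in> TS \<mu> C" for x y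
  proof -
    obtain P where P: "x = (\<Sum>B\<in>P. \<bar>\<mu> B\<bar>)" "finite P" "P \<subseteq> M" "disjoint P" "\<Union>P = B"
      using x unfolding TS_def by blast
    obtain Q where Q: "y = (\<Sum>B\<in>Q. \<bar>\<mu> B\<bar>)" "finite Q" "Q \<subseteq> M" "disjoint Q" "\<Union>Q = C"
      using y unfolding TS_def by blast
    have PB: "\<And>X. X \<in> P \<Longrightarrow> X \<subseteq> B" using P(5) by blast
    have QC: "\<And>X. X \<in> Q \<Longrightarrow> X \<subseteq> C" using Q(5) by blast
    have PQ: "\<And>X. X \<in> P \<inter> Q \<Longrightarrow> X = {}"
    proof -
      fix X assume "X \<in> P \<inter> Q"
      then have "X \<subseteq> B \<inter> C" using PB QC by blast
      then show "X = {}" using BC by blast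
    qed
    have z: "(\<Sum>X\<in>P \<inter> Q. \<bar>\<mu> X\<bar>) = 0"
      by (intro sum.neutral) (use PQ ba_empty[OF mu] in auto)
    have d: "disjoint (P \<union> Q)"
      unfolding pairwise_def disjnt_def
    proof (intro ballI impI)
      fix X Y assume X: "X \<in> P \<union> Q" and Y: "Y \<in> P \<union> Q" and XY: "X \<noteq> Y"
      show "X \<inter> Y = {}"
      proof (cases "X \<in> P")
        case True
        show ?thesis
        proof (cases "Y \<in> P")
          case True
          with \<open>X \<in> P\<close> XY P(4) show ?thesis unfolding pairwise_def disjnt_def by blast
        next
          case False
          then have "Y \<subseteq> C" using Y QC by blast
          moreover have "X \<subseteq> B" using \<open>X \<in> P\<close> PB by blast
          ultimately show ?thesis using BC by blast
        qed
      next
        case False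
        then have XQ: "X \<in> Q" using X by blast
        show ?thesis
        proof (cases "Y \<in> Q")
          case True
          with XQ XY Q(4) show ?thesis unfolding pairwise_def disjnt_def by blast
        next
          case False
          then have "Y \<subseteq> B" using Y PB by blast
          moreover have "X \<subseteq> C" using XQ QC by blast
          ultimately show ?thesis using BC by blast
        qed
      qed
    qed
    have "x + y = (\<Sum>X\<in>P \<union> Q. \<bar>\<mu> X\<bar>)"
      using sum.union_inter[OF P(2) Q(2), of "\<lambda>X. \<bar>\<mu> X\<bar>"] z P(1) Q(1) by simp
    also have "\<dots> \<in> TS \<mu> (B \<union> C)"
      unfolding TS_def using P(2,3,5) Q(2,3,5) d by (intro CollectI exI[of _ "P \<union> Q"]) auto
    hence "(\<Sum>X\<in>P \<union> Q. \<bar>\<mu> X\<bar>) \<le> tv M \<mu> (B \<union> C)"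
      unfolding tv_TS by (rule cSup_upper[OF _ TS_bdd[OF mu]])
    finally show ?thesis .
  qed
  have "tv M \<mu> B \<le> tv M \<mu> (B \<union> C) - y" if y: "y \<in> TS \<mu> C" for y
    unfolding tv_TS[of \<mu> B]
  proof (rule cSup_least[OF TS_ne[OF B]])
    fix x assume "x \<in> TS \<mu> B"
    from key[OF this y] show "x \<le> tv M \<mu> (B \<union> C) - y" by linarith
  qed
  hence "tv M \<mu> C \<le> tv M \<mu> (B \<union> C) - tv M \<mu> B"
    unfolding tv_TS[of \<mu> C]
  proof -
    assume h: "\<And>y. y \<in> TS \<mu> C \<Longrightarrow> tv M \<mu> B \<le> tv M \<mu> (B \<union> C) - y"
    show "Sup (TS \<mu> C) \<le> tv M \<mu> (B \<union> C) - tv M \<mu> B"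
    proof (rule cSup_least[OF TS_ne[OF C]])
      fix y assume "y \<in> TS \<mu> C"
      from h[OF this] show "y \<le> tv M \<mu> (B \<union> C) - tv M \<mu> B" by linarith
    qed
  qed
  thus ?thesis by simp
qed

lemma tv_mono:
  assumes mu: "\<mu> \<in> ba M" and D: "D \<in> M" and E: "E \<in> M" and DE: "D \<subseteq> E"
  shows "tv M \<mu> D \<le> tv M \<mu> E"
proof -
  have "E = D \<union> (E - D)" using DE by auto
  then have "tv M \<mu> D + tv M \<mu> (E - D) \<le> tv M \<mu> E"
    using tv_super[OF mu D, of "E - D"] D E by auto
  thus ?thesis using tv_nonneg[OF mu Diff[OF E D]] by linarith
qed

lemma tv_bdd: "\<mu> \<in> ba M \<Longrightarrow> \<exists>c. \<forall>A\<in>M. tv M \<mu> A \<le> c"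
proof -
  assume mu: "\<mu> \<in> ba M"
  obtain c where "\<forall>P. finite P \<and> P \<subseteq> M \<and> disjoint P \<longrightarrow> (\<Sum>B\<in>P. \<bar>\<mu> B\<bar>) \<le> c"
    using tv_set_bdd[OF mu] by blast
  then have "tv M \<mu> A \<le> c" if "A \<in> M" for A
    unfolding tv_TS using TS_ne[OF that] by (intro cSup_least) (auto simp: TS_def)
  thus ?thesis by blast
qed

end
theorem mainTheorem16:
  fixes \<Omega> :: "'a set" and AA :: "'a set set" and lam :: "'a set \<Rightarrow> real"
    and MM :: "('a set \<Rightarrow> real) set" and H0 :: "'a set set"
  assumes "algebra \<Omega> AA"
    and "lam \<in> ba AA"
    and "MM \<subseteq> ba_ac AA lam"
    and "H0 \<subseteq> AA"
    and "H0 \<noteq> {}"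
  shows "\<exists>Hs :: nat \<Rightarrow> 'a set. (\<forall>n. Hs n \<in> H0) \<and>
    (let Gs = (\<lambda>n. Hs n - (\<Union>k<n. Hs k)); G = (\<Inter>n. \<Omega> - Hs n) in
      (\<forall>\<mu>\<in>MM. \<forall>H\<in>gen_ring \<Omega> H0.
          outer_tv AA \<mu> (H \<inter> G) = 0 \<and>
          (\<forall>A\<in>AA. (\<lambda>n. \<mu> (A \<inter> H \<inter> Gs n)) sums \<mu> (A \<inter> H)))
      \<and> (\<forall>\<mu>\<in>MM. inner_regular AA H0 \<mu> \<longrightarrow>
            (\<forall>A\<in>AA. (\<lambda>n. \<mu> (A \<inter> Gs n)) sums \<mu> A))
      \<and> ((\<forall>F :: nat \<Rightarrow> 'a set. range F \<subseteq> H0 \<longrightarrow> (\<Union>n. F n) \<in> H0) \<longrightarrow>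
            (\<forall>\<mu>\<in>MM. \<forall>A\<in>AA. summable (\<lambda>n. \<mu> (A \<inter> Gs n)) \<and>
                 \<mu> A = \<mu> (A \<inter> G) + (\<Sum>n. \<mu> (A \<inter> Gs n)))))"
proof -
  interpret A: algebra \<Omega> AA by fact
  note lamba = assms(2)
  have MMba: "\<And>\<mu>. \<mu> \<in> MM \<Longrightarrow> \<mu> \<in> ba AA" and MMac: "\<And>\<mu>. \<mu> \<in> MM \<Longrightarrow> abs_cont AA \<mu> lam"
    using assms(3) unfolding ba_ac_def by auto
  have H0AA: "\<And>F. finite F \<Longrightarrow> F \<subseteq> H0 \<Longrightarrow> \<Union>F \<in> AA"
    using assms(4) by (intro A.finite_Union) auto
  have gr: "H \<in> AA \<and> (\<exists>F. finite F \<and> F \<subseteq> H0 \<and> H \<subseteq> \<Union>F)" if "H \<in> gen_ring \<Omega> H0" for H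
  proof -
    define R0 where "R0 = {B\<in>AA. \<exists>F. finite F \<and> F \<subseteq> H0 \<and> B \<subseteq> \<Union>F}"
    have "ring_of_sets \<Omega> R0"
    proof (rule ring_of_setsI)
      show "R0 \<subseteq> Pow \<Omega>" unfolding R0_def using A.space_closed by auto
      show "{} \<in> R0" unfolding R0_def by auto
      fix a b assume a: "a \<in> R0" and b: "b \<in> R0"
      then obtain Fa Fb where "finite Fa" "Fa \<subseteq> H0" "a \<subseteq> \<Union>Fa" "finite Fb" "Fb \<subseteq> H0" "b \<subseteq> \<Union>Fb"
        "a \<in> AA" "b \<in> AA"
        unfolding R0_def by blast
      note X = this
      have "a \<union> b \<in> AA" "a - b \<in> AA" using X by auto
      moreover have "finite (Fa \<union> Fb) \<and> Fa \<union> Fb \<subseteq> H0 \<and> a \<union> b \<subseteq> \<Union>(Fa \<union> Fb)"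
        using X by auto
      moreover have "a - b \<subseteq> \<Union>Fa" using X by auto
      ultimately show "a \<union> b \<in> R0" "a - b \<in> R0" unfolding R0_def using X by blast+
    qed
    moreover have "H0 \<subseteq> R0"
    proof
      fix h assume h: "h \<in> H0"
      have "finite {h} \<and> {h} \<subseteq> H0 \<and> h \<subseteq> \<Union>{h}" using h by auto
      then show "h \<in> R0" unfolding R0_def using h assms(4) by blast
    qed
    ultimately have "gen_ring \<Omega> H0 \<subseteq> R0" unfolding gen_ring_def by blast
    thus ?thesis using that unfolding R0_def by blast
  qed
  have H0gr: "H0 \<subseteq> gen_ring \<Omega> H0" unfolding gen_ring_def by blast
  define S where "S = {tv AA lam (\<Union>F) | F. finite F \<and> F \<subseteq> H0}"
  obtain c where c: "\<forall>A\<in>AA. tv AA lam A \<le> c" using A.tv_bdd[OF lamba] by blast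
  have Sbdd: "bdd_above S" unfolding S_def bdd_above_def
    by (rule exI[of _ c]) (use c H0AA in auto)
  have Sne: "S \<noteq> {}" unfolding S_def by blast
  define s where "s = Sup S"
  have Sle: "tv AA lam (\<Union>F) \<le> s" if "finite F" "F \<subseteq> H0" for F
    unfolding s_def by (rule cSup_upper[OF _ Sbdd]) (use that in \<open>auto simp: S_def\<close>)
  have "\<forall>m::nat. \<exists>F. finite F \<and> F \<subseteq> H0 \<and> s - inverse (real (Suc m)) < tv AA lam (\<Union>F)"
  proof
    fix m :: nat
    have "s - inverse (real (Suc m)) < s" by simp
    then obtain x where "x \<in> S" "s - inverse (real (Suc m)) < x"
      unfolding s_def using less_cSupE[OF _ Sne] by metis
    thus "\<exists>F. finite F \<and> F \<subseteq> H0 \<and> s - inverse (real (Suc m)) < tv AA lam (\<Union>F)"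
      unfolding S_def by blast
  qed
  then obtain Fs where Fs: "\<And>m. finite (Fs m) \<and> Fs m \<subseteq> H0 \<and> s - inverse (real (Suc m)) < tv AA lam (\<Union>(Fs m))"
    by metis
  obtain h0 where h0: "h0 \<in> H0" using assms(5) by blast
  define W where "W = insert h0 (\<Union>m. Fs m)"
  have "countable (\<Union>m. Fs m)"
    by (rule countable_UN[OF countableI_type]) (use Fs in \<open>simp add: countable_finite\<close>)
  then have Wc: "countable W" unfolding W_def by simp
  have Wne: "W \<noteq> {}" by (simp add: W_def)
  have WH0: "W \<subseteq> H0" using Fs h0 by (auto simp: W_def)
  define Hs where "Hs = from_nat_into W"
  have HsH0: "\<And>n. Hs n \<in> H0" using from_nat_into[OF Wne] WH0 unfolding Hs_def by blast
  have HsAA: "\<And>n. Hs n \<in> AA" using HsH0 assms(4) by blast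
  have rng: "range Hs = W" unfolding Hs_def using Wc Wne by simp
  define U where "U = (\<lambda>n. \<Union>k<n. Hs k)"
  have Ueq: "\<And>n. (\<Union>k<n. Hs k) = U n" by (simp add: U_def)
  have UAA: "\<And>n. U n \<in> AA" unfolding U_def using HsAA by (intro A.finite_UN) auto
  have Fcov: "\<exists>N. Fs m \<subseteq> Hs ` {..<N}" for m
  proof -
    have "Fs m \<subseteq> Hs ` UNIV" using rng W_def by auto
    then obtain C where C: "finite C" "Fs m = Hs ` C"
      using finite_subset_image[of "Fs m" Hs UNIV] Fs by auto
    then obtain N where "C \<subseteq> {..<N}" using finite_nat_bounded by blast
    thus ?thesis using C by blast
  qed
  have K: "\<exists>N. \<forall>n\<ge>N. \<forall>F. finite F \<and> F \<subseteq> H0 \<longrightarrow> tv AA lam (\<Union>F - U n) < \<epsilon>"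
    if e: "\<epsilon> > 0" for \<epsilon> :: real
  proof -
    obtain m :: nat where m: "inverse (real (Suc m)) < \<epsilon>" using reals_Archimedean e by blast
    obtain N where N: "Fs m \<subseteq> Hs ` {..<N}" using Fcov by blast
    show ?thesis
    proof (intro exI allI impI)
      fix n F assume n: "N \<le> n" and F: "finite F \<and> F \<subseteq> H0"
      have sub: "\<Union>(Fs m) \<subseteq> U n" using N n unfolding U_def by fastforce
      have 1: "tv AA lam (\<Union>(Fs m)) \<le> tv AA lam (U n)"
        by (rule A.tv_mono[OF lamba H0AA UAA sub]) (use Fs in auto)
      have FAA: "\<Union>F \<in> AA" using F H0AA by blast
      have 2: "tv AA lam (\<Union>F - U n) + tv AA lam (U n) \<le> tv AA lam ((\<Union>F - U n) \<union> U n)"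
        by (rule A.tv_super[OF lamba]) (use FAA UAA in auto)
      have 3: "(\<Union>F - U n) \<union> U n = \<Union>(F \<union> Hs ` {..<n})" unfolding U_def by auto
      have 4: "tv AA lam (\<Union>(F \<union> Hs ` {..<n})) \<le> s" by (rule Sle) (use F HsH0 in auto)
      have 5: "s - inverse (real (Suc m)) < tv AA lam (\<Union>(Fs m))" using Fs[of m] by blast
      show "tv AA lam (\<Union>F - U n) < \<epsilon>" using 1 2[unfolded 3] 4 5 m by linarith
    qed
  qed
  have Kmu: "\<exists>N. \<forall>n\<ge>N. \<forall>D\<in>AA. \<forall>F. finite F \<and> F \<subseteq> H0 \<and> D \<subseteq> \<Union>F - U n \<longrightarrow> tv AA \<mu> D < \<epsilon>"
    if mu: "\<mu> \<in> MM" and e: "\<epsilon> > 0" for \<mu> \<epsilon>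
  proof -
    obtain \<delta> where d: "\<delta> > 0" "\<forall>A\<in>AA. tv AA lam A < \<delta> \<longrightarrow> tv AA \<mu> A < \<epsilon>"
      using MMac[OF mu] e unfolding abs_cont_def by blast
    obtain N where N: "\<forall>n\<ge>N. \<forall>F. finite F \<and> F \<subseteq> H0 \<longrightarrow> tv AA lam (\<Union>F - U n) < \<delta>"
      using K[OF d(1)] by blast
    show ?thesis
    proof (intro exI allI impI ballI)
      fix n D F assume n: "N \<le> n" and D: "D \<in> AA" and F: "finite F \<and> F \<subseteq> H0 \<and> D \<subseteq> \<Union>F - U n"
      have "tv AA lam D \<le> tv AA lam (\<Union>F - U n)"
        by (rule A.tv_mono[OF lamba D]) (use F H0AA UAA in auto)
      moreover have "tv AA lam (\<Union>F - U n) < \<delta>" using N n F by blast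
      ultimately show "tv AA \<mu> D < \<epsilon>" using d(2) D by force
    qed
  qed
  have decomp: "\<mu> E = (\<Sum>k<n. \<mu> (E \<inter> (Hs k - U k))) + \<mu> (E - U n)"
    if mu: "\<mu> \<in> ba AA" and E: "E \<in> AA" for \<mu> E n
  proof (induction n)
    case 0 show ?case by (simp add: U_def)
  next
    case (Suc n)
    have Us: "U (Suc n) = U n \<union> Hs n" by (auto simp: U_def lessThan_Suc)
    have "E - U n = (E \<inter> (Hs n - U n)) \<union> (E - U (Suc n))" using Us by auto
    moreover have "(E \<inter> (Hs n - U n)) \<inter> (E - U (Suc n)) = {}" using Us by auto
    moreover have "E \<inter> (Hs n - U n) \<in> AA" "E - U (Suc n) \<in> AA" using E HsAA UAA by auto
    ultimately have "\<mu> (E - U n) = \<mu> (E \<inter> (Hs n - U n)) + \<mu> (E - U (Suc n))"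
      using A.ba_add[OF mu] by metis
    then show ?case using Suc.IH by simp
  qed
  have sumsI: "(\<lambda>n. \<mu> (E \<inter> (Hs n - U n))) sums \<mu> E"
    if mu: "\<mu> \<in> ba AA" and E: "E \<in> AA" and lim: "(\<lambda>n. \<mu> (E - U n)) \<longlonglongrightarrow> 0" for \<mu> E
  proof -
    have "(\<lambda>n. \<mu> E - \<mu> (E - U n)) \<longlonglongrightarrow> \<mu> E - 0" by (intro tendsto_diff tendsto_const lim)
    moreover have "\<And>n. \<mu> E - \<mu> (E - U n) = (\<Sum>k<n. \<mu> (E \<inter> (Hs k - U k)))"
      using decomp[OF mu E] by (metis add_diff_cancel_right')
    ultimately show ?thesis unfolding sums_def by simp
  qed
  define G where "G = (\<Inter>n. \<Omega> - Hs n)"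
  have P1: "\<forall>\<mu>\<in>MM. \<forall>H\<in>gen_ring \<Omega> H0. outer_tv AA \<mu> (H \<inter> G) = 0 \<and>
          (\<forall>A\<in>AA. (\<lambda>n. \<mu> (A \<inter> H \<inter> (Hs n - U n))) sums \<mu> (A \<inter> H))"
  proof (intro ballI, intro conjI)
    fix \<mu> H assume mu: "\<mu> \<in> MM" and H: "H \<in> gen_ring \<Omega> H0"
    obtain F where F: "finite F" "F \<subseteq> H0" "H \<subseteq> \<Union>F" and HAA: "H \<in> AA" using gr[OF H] by blast
    define T where "T = {tv AA \<mu> A | A. A \<in> AA \<and> H \<inter> G \<subseteq> A}"
    have T0: "\<And>x. x \<in> T \<Longrightarrow> 0 \<le> x" unfolding T_def using A.tv_nonneg[OF MMba[OF mu]] by auto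
    have Tne: "T \<noteq> {}" unfolding T_def using HAA by blast
    have Tb: "bdd_below T" using T0 unfolding bdd_below_def by blast
    have small: "Inf T < \<epsilon>" if e: "\<epsilon> > 0" for \<epsilon>
    proof -
      obtain N where N: "\<forall>n\<ge>N. \<forall>D\<in>AA. \<forall>F. finite F \<and> F \<subseteq> H0 \<and> D \<subseteq> \<Union>F - U n \<longrightarrow> tv AA \<mu> D < \<epsilon>"
        using Kmu[OF mu e] by blast
      have DAA: "H - U N \<in> AA" using HAA UAA by blast
      have "H \<inter> G \<subseteq> H - U N" unfolding G_def U_def by blast
      then have "tv AA \<mu> (H - U N) \<in> T" unfolding T_def using DAA by blast
      then have "Inf T \<le> tv AA \<mu> (H - U N)" by (rule cInf_lower[OF _ Tb])
      also have "\<dots> < \<epsilon>" using N[rule_format, OF order.refl DAA, of F] F by blast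
      finally show ?thesis .
    qed
    have "0 \<le> Inf T" using T0 Tne by (intro cInf_greatest) auto
    then show "outer_tv AA \<mu> (H \<inter> G) = 0" unfolding outer_tv_def T_def[symmetric]
      using small[of "Inf T"] by force
    show "\<forall>A\<in>AA. (\<lambda>n. \<mu> (A \<inter> H \<inter> (Hs n - U n))) sums \<mu> (A \<inter> H)"
    proof
      fix A assume A: "A \<in> AA"
      have EAA: "A \<inter> H \<in> AA" using A HAA by blast
      show "(\<lambda>n. \<mu> (A \<inter> H \<inter> (Hs n - U n))) sums \<mu> (A \<inter> H)"
      proof (rule sumsI[OF MMba[OF mu] EAA], rule LIMSEQ_I)
        fix r :: real assume r: "0 < r"
        obtain N where N: "\<forall>n\<ge>N. \<forall>D\<in>AA. \<forall>F. finite F \<and> F \<subseteq> H0 \<and> D \<subseteq> \<Union>F - U n \<longrightarrow> tv AA \<mu> D < r"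
          using Kmu[OF mu r] by blast
        show "\<exists>no. \<forall>n\<ge>no. norm (\<mu> (A \<inter> H - U n) - 0) < r"
        proof (intro exI allI impI)
          fix n assume n: "N \<le> n"
          have DAA: "A \<inter> H - U n \<in> AA" using EAA UAA by blast
          have "tv AA \<mu> (A \<inter> H - U n) < r" using N[rule_format, OF n DAA, of F] F by blast
          then show "norm (\<mu> (A \<inter> H - U n) - 0) < r"
            using A.tv_ge[OF MMba[OF mu] DAA] by simp
        qed
      qed
    qed
  qed
  have P2: "\<forall>\<mu>\<in>MM. inner_regular AA H0 \<mu> \<longrightarrow> (\<forall>A\<in>AA. (\<lambda>n. \<mu> (A \<inter> (Hs n - U n))) sums \<mu> A)"
  proof (intro ballI impI)
    fix \<mu> A assume mu: "\<mu> \<in> MM" and ir: "inner_regular AA H0 \<mu>" and A: "A \<in> AA"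
    note mub = MMba[OF mu]
    obtain cm where cm: "\<forall>B\<in>AA. \<bar>\<mu> B\<bar> \<le> cm" using A.ba_bound[OF mub] by blast
    show "(\<lambda>n. \<mu> (A \<inter> (Hs n - U n))) sums \<mu> A"
    proof (rule sumsI[OF mub A], rule LIMSEQ_I)
      fix r :: real assume r: "0 < r"
      obtain N where N: "\<forall>n\<ge>N. \<forall>D\<in>AA. \<forall>F. finite F \<and> F \<subseteq> H0 \<and> D \<subseteq> \<Union>F - U n \<longrightarrow> tv AA \<mu> D < r/2"
        using Kmu[OF mu, of "r/2"] r by auto
      show "\<exists>no. \<forall>n\<ge>no. norm (\<mu> (A - U n) - 0) < r"
      proof (intro exI allI impI)
        fix n assume n: "N \<le> n"
        define D where "D = A - U n"
        have DAA: "D \<in> AA" unfolding D_def using A UAA by blast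
        have Hs: "\<bar>\<mu> H\<bar> < r/2" if "H \<in> H0" "H \<subseteq> D" for H
        proof -
          have HA: "H \<in> AA" using that assms(4) by blast
          have "tv AA \<mu> H < r/2" using N[rule_format, OF n HA, of "{H}"] that unfolding D_def
            by auto
          thus ?thesis using A.tv_ge[OF mub HA] by simp
        qed
        have ir2: "ereal (pos_part AA \<mu> D) = (SUP H\<in>{H\<in>H0. H \<subseteq> D}. ereal (\<mu> H))"
             "ereal (neg_part AA \<mu> D) = (SUP H\<in>{H\<in>H0. H \<subseteq> D}. ereal (- \<mu> H))"
          using ir DAA unfolding inner_regular_def by auto
        have "ereal (pos_part AA \<mu> D) \<le> ereal (r/2)"
          unfolding ir2(1) using Hs by (intro SUP_least) (force simp: abs_less_iff)
        then have pp: "pos_part AA \<mu> D \<le> r/2" by simp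
        have "ereal (neg_part AA \<mu> D) \<le> ereal (r/2)"
          unfolding ir2(2) using Hs by (intro SUP_least) (force simp: abs_less_iff)
        then have np: "neg_part AA \<mu> D \<le> r/2" by simp
        have "\<mu> D \<le> pos_part AA \<mu> D" unfolding pos_part_def
          by (rule cSup_upper) (use DAA cm in \<open>auto simp: bdd_above_def abs_le_iff\<close>)
        moreover have "- \<mu> D \<le> neg_part AA \<mu> D" unfolding neg_part_def
          by (rule cSup_upper) (use DAA cm in \<open>auto simp: bdd_above_def abs_le_iff\<close>)
        ultimately show "norm (\<mu> (A - U n) - 0) < r" using pp np r unfolding D_def[symmetric] by simp
      qed
    qed
  qed
  have P3: "(\<forall>F :: nat \<Rightarrow> 'a set. range F \<subseteq> H0 \<longrightarrow> (\<Union>n. F n) \<in> H0) \<longrightarrow>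
            (\<forall>\<mu>\<in>MM. \<forall>A\<in>AA. summable (\<lambda>n. \<mu> (A \<inter> (Hs n - U n))) \<and>
                 \<mu> A = \<mu> (A \<inter> G) + (\<Sum>n. \<mu> (A \<inter> (Hs n - U n))))"
  proof (intro impI ballI)
    fix \<mu> A assume cl: "\<forall>F :: nat \<Rightarrow> 'a set. range F \<subseteq> H0 \<longrightarrow> (\<Union>n. F n) \<in> H0"
      and mu: "\<mu> \<in> MM" and A: "A \<in> AA"
    define V where "V = (\<Union>n. Hs n)"
    have VH0: "V \<in> H0" unfolding V_def using cl HsH0 by blast
    have VAA: "V \<in> AA" using VH0 assms(4) by blast
    have sm: "(\<lambda>n. \<mu> (A \<inter> V \<inter> (Hs n - U n))) sums \<mu> (A \<inter> V)"
      using P1 mu VH0 H0gr A by blast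
    have eq: "\<And>n. A \<inter> V \<inter> (Hs n - U n) = A \<inter> (Hs n - U n)" unfolding V_def by blast
    have sm2: "(\<lambda>n. \<mu> (A \<inter> (Hs n - U n))) sums \<mu> (A \<inter> V)" using sm unfolding eq .
    have AO: "A \<subseteq> \<Omega>" using A A.sets_into_space by blast
    have "A = (A \<inter> G) \<union> (A \<inter> V)" "(A \<inter> G) \<inter> (A \<inter> V) = {}"
      using AO unfolding G_def V_def by blast+
    moreover have "A \<inter> G = A - V" using AO unfolding G_def V_def by blast
    ultimately have "\<mu> A = \<mu> (A \<inter> G) + \<mu> (A \<inter> V)"
      using A.ba_add[OF MMba[OF mu], of "A \<inter> G" "A \<inter> V"] A VAA by (metis A.Diff A.Int)
    then show "summable (\<lambda>n. \<mu> (A \<inter> (Hs n - U n))) \<and>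
                 \<mu> A = \<mu> (A \<inter> G) + (\<Sum>n. \<mu> (A \<inter> (Hs n - U n)))"
      using sm2 sums_summable sums_unique by metis
  qed
  show ?thesis
    apply (rule exI[of _ Hs])
    apply (simp only: Let_def Ueq G_def[symmetric])
    using HsH0 P1 P2 P3 by blast
qed

end
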